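(* Let $H=(U,(A_1,\dots,A_m))$ be a harmonic set system and suppose there exist $i<j$ with $A_i=A_j$. Then $A_1=A_2=\cdots=A_m$, or $(m,i,j)=(3,1,3)$.
   Context: For $I\subseteq[m]$, $H_I=\bigcap_{i\in I}A_i$ ($=U$ if $I=\emptyset$). The run decomposition of a finite set $I$ of positive integers is the partition of sizes, in nonincreasing order, of the maximal runs of consecutive integers in $I$. $H$ is harmonic if $|H_I|=|H_J|$ whenever $I,J\subseteq[m]$ have the same run decomposition. *)

theory Defs
  imports Main "HOL-Library.Multiset"
begin

definition runs :: "nat set \<Rightarrow> nat set set" where
  "runs I = {{a..b} | a b. a \<le> b \<and> {a..b} \<subseteq> I
                      \<and> (\<forall>k. Suc k = a \<longrightarrow> k \<notin> I) \<and> Suc b \<notin> I}"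

definition run_decomposition :: "nat set \<Rightarrow> nat multiset" where
  "run_decomposition I = image_mset card (mset_set (runs I))"

definition HI :: "'a set \<Rightarrow> (nat \<Rightarrow> 'a set) \<Rightarrow> nat set \<Rightarrow> 'a set" where
  "HI U A I = (if I = {} then U else (\<Inter>i\<in>I. A i))"

definition set_system :: "'a set \<Rightarrow> nat \<Rightarrow> (nat \<Rightarrow> 'a set) \<Rightarrow> bool" where
  "set_system U m A \<longleftrightarrow> finite U \<and> (\<forall>i\<in>{1..m}. A i \<subseteq> U)"

definition harmonic :: "'a set \<Rightarrow> nat \<Rightarrow> (nat \<Rightarrow> 'a set) \<Rightarrow> bool" where
  "harmonic U m A \<longleftrightarrow>
     (\<forall>I J. I \<subseteq> {1..m} \<and> J \<subseteq> {1..m} \<and> run_decomposition I = run_decomposition J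
        \<longrightarrow> card (HI U A I) = card (HI U A J))"

end

theory Submission
  imports Defs
begin

lemma runs_single: "runs {k} = {{k}}"
proof (rule set_eqI, rule iffI)
  fix X assume "X \<in> runs {k}"
  then obtain a b where X: "X = {a..b}" "a \<le> b" "{a..b} \<subseteq> {k}"
    unfolding runs_def by blast
  then have "a \<in> {k}" "b \<in> {k}" by auto
  then show "X \<in> {{k}}" using X by auto
next
  fix X assume X: "X \<in> {{k}}"
  have "{k..k} \<in> runs {k}" unfolding runs_def
    by (intro CollectI exI[of _ k]) auto
  then show "X \<in> runs {k}" using X by auto
qed

lemma runs_adj: "runs {k, Suc k} = {{k..Suc k}}"
proof -
  have 1: "a = k \<and> b = Suc k" if h: "{a..b} \<subseteq> {k, Suc k}" "a \<le> b"
     "\<forall>kk. Suc kk = a \<longrightarrow> kk \<notin> {k, Suc k}" "Suc b \<notin> {k, Suc k}" for a b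
  proof -
    have "a \<in> {k, Suc k}" "b \<in> {k, Suc k}" using h(1,2) by auto
    then show ?thesis using h(3,4) by auto
  qed
  show ?thesis unfolding runs_def
    apply (rule set_eqI, rule iffI)
    using 1 apply blast
    by auto
qed

lemma runs_far: assumes "Suc k < l" shows "runs {k, l} = {{k},{l}}"
proof -
  have 1: "a = b \<and> (a = k \<or> a = l)" if h: "{a..b} \<subseteq> {k, l}" "a \<le> b" for a b
  proof -
    have a: "a \<in> {k, l}" using h by auto
    have "\<not> Suc a \<le> b"
    proof
      assume "Suc a \<le> b"
      then have "Suc a \<in> {a..b}" by simp
      then have "Suc a \<in> {k,l}" using h(1) by blast
      then show False using a assms by auto
    qed
    then show ?thesis using a h by auto
  qed
  show ?thesis
  proof (rule set_eqI, rule iffI)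
    fix X assume "X \<in> runs {k, l}"
    then obtain a b where X: "X = {a..b}" "a \<le> b" "{a..b} \<subseteq> {k, l}"
      unfolding runs_def by blast
    then have "a = b \<and> (a = k \<or> a = l)" using 1 by blast
    then show "X \<in> {{k},{l}}" using X by auto
  next
    fix X assume X: "X \<in> {{k},{l}}"
    have "{k..k} \<in> runs {k, l}" unfolding runs_def using assms
      by (intro CollectI exI[of _ k]) auto
    moreover have "{l..l} \<in> runs {k, l}" unfolding runs_def using assms
      by (intro CollectI exI[of _ l]) auto
    ultimately show "X \<in> runs {k, l}" using X by auto
  qed
qed

lemma rd_single: "run_decomposition {k} = {#1#}"
  unfolding run_decomposition_def runs_single by simp

lemma rd_adj: "run_decomposition {k, Suc k} = {#2#}"
  unfolding run_decomposition_def runs_adj by simp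

lemma rd_far: assumes "Suc k < l" shows "run_decomposition {k, l} = {#1, 1#}"
proof -
  have "{k} \<noteq> {l}" using assms by auto
  then show ?thesis unfolding run_decomposition_def runs_far[OF assms] by simp
qed

lemma HI_single: "HI U A {k} = A k" unfolding HI_def by simp
lemma HI_pair: "HI U A {k, l} = A k \<inter> A l" unfolding HI_def by simp

lemma eq_from_card:
  assumes "finite U" "A k \<subseteq> U" "A l \<subseteq> U" "card (A k \<inter> A l) = card (A k)"
    "card (A k) = card (A l)"
  shows "A k = A l"
proof -
  have fk: "finite (A k)" and fl: "finite (A l)" using assms finite_subset by auto
  have "A k \<inter> A l = A k" using card_subset_eq[OF fk _ assms(4)] by auto
  moreover have "A k \<inter> A l = A l" using card_subset_eq[OF fl _ ] assms(4,5) by auto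
  ultimately show ?thesis by simp
qed

lemma all_eq:
  assumes "\<forall>k\<in>S. A k = A c" shows "\<forall>k\<in>S. \<forall>l\<in>S. A k = A l"
proof (intro ballI)
  fix k l assume "k \<in> S" "l \<in> S"
  then have "A k = A c" "A l = A c" using assms by blast+
  then show "A k = A l" by simp
qed

theorem proposition5p1:
  fixes U :: "'a set" and m :: nat and A :: "nat \<Rightarrow> 'a set" and i j :: nat
  assumes "set_system U m A"
    and "harmonic U m A"
    and "1 \<le> i" and "i < j" and "j \<le> m"
    and "A i = A j"
  shows "(\<forall>k\<in>{1..m}. \<forall>l\<in>{1..m}. A k = A l) \<or> (m = 3 \<and> i = 1 \<and> j = 3)"
proof -
  have fin: "finite U" and sub: "\<And>k. k \<in> {1..m} \<Longrightarrow> A k \<subseteq> U"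
    using assms(1) unfolding set_system_def by auto
  have H: "\<And>I J. I \<subseteq> {1..m} \<Longrightarrow> J \<subseteq> {1..m} \<Longrightarrow> run_decomposition I = run_decomposition J
      \<Longrightarrow> card (HI U A I) = card (HI U A J)"
    using assms(2) unfolding harmonic_def by blast
  have single: "card (A k) = card (A l)" if "k \<in> {1..m}" "l \<in> {1..m}" for k l
    using H[of "{k}" "{l}"] that by (simp add: rd_single HI_single)
  show ?thesis
  proof (cases "j = Suc i")
    case True
    have ci: "card (A i \<inter> A (Suc i)) = card (A i)" using True assms(6) by simp
    have adj: "A k = A (Suc k)" if "1 \<le> k" "Suc k \<le> m" for k
    proof -
      have "card (HI U A {k, Suc k}) = card (HI U A {i, Suc i})"
        apply (rule H) using that True assms(3,5) by (auto simp: rd_adj)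
      then have "card (A k \<inter> A (Suc k)) = card (A i)" using ci by (simp add: HI_pair)
      moreover have "card (A i) = card (A k)" using single that assms(3,4,5) by auto
      ultimately show ?thesis
        using eq_from_card[OF fin, of A k "Suc k"] sub that single[of k "Suc k"] by auto
    qed
    have ind: "Suc k \<le> m \<longrightarrow> A (Suc k) = A 1" for k
    proof (induction k)
      case 0 then show ?case by simp
    next
      case (Suc k)
      show ?case
      proof
        assume h: "Suc (Suc k) \<le> m"
        then have "A (Suc k) = A 1" using Suc.IH by simp
        moreover have "A (Suc k) = A (Suc (Suc k))" using adj[of "Suc k"] h by simp
        ultimately show "A (Suc (Suc k)) = A 1" by simp
      qed
    qed
    have "\<forall>k\<in>{1..m}. A k = A 1"
    proof
      fix k assume k: "k \<in> {1..m}"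
      then obtain k' where "k = Suc k'" by (cases k) auto
      moreover have "Suc k' \<le> m" using k calculation by simp
      ultimately show "A k = A 1" using ind[of k'] by simp
    qed
    then show ?thesis using all_eq[of _ A] by blast
  next
    case False
    then have ij: "Suc i < j" using assms(4) by auto
    have ci: "card (A i \<inter> A j) = card (A i)" using assms(6) by simp
    have far: "A k = A l" if "1 \<le> k" "Suc k < l" "l \<le> m" for k l
    proof -
      have "card (HI U A {k, l}) = card (HI U A {i, j})"
        apply (rule H) using that ij assms(3,5) by (auto simp: rd_far)
      then have "card (A k \<inter> A l) = card (A i)" using ci by (simp add: HI_pair)
      moreover have "card (A i) = card (A k)" using single that assms(3,4,5) by auto
      ultimately show ?thesis
        using eq_from_card[OF fin, of A k l] sub that single[of k l] by auto
    qed
    show ?thesis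
    proof (cases "m = 3")
      case True
      then show ?thesis using ij assms(3,5) by auto
    next
      case False
      then have m4: "4 \<le> m" using ij assms(3,5) by auto
      have "A k = A 1" if kk: "k \<in> {1..m}" for k
      proof -
        from kk consider "k = 1" | "k = 2" | "3 \<le> k" by force
        then show ?thesis
        proof cases
          case 2
          then show ?thesis using far[of 2 4] far[of 1 4] m4 by simp
        next
          case 3
          then show ?thesis using far[of 1 k] kk by simp
        qed simp
      qed
      then show ?thesis using all_eq[of _ A] by blast
    qed
  qed
qed

end
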